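(* Let $n\geq 3$, let $\alpha\in(1/2,1]$, and let $A$ and $B$ be two $n\times n$ generalized tournament matrices that are both $\alpha$-linear. Then there exists a clan $X$ of $A$ such that $\mathrm{Inv}(A,X)$ and $B$ have a common nontrivial clan.
   Context: A generalized tournament matrix of order $n$ is a real $n\times n$ matrix $M=(m_{ij})$ with nonnegative entries satisfying $M+M^{t}=J_n-I_n$. Write $[n]=\{1,\ldots,n\}$. A clan of $M$ is a subset $X\subseteq[n]$ such that for all $i,j\in X$ and $k\in[n]\setminus X$, $m_{ik}=m_{jk}$ and $m_{ki}=m_{kj}$; the empty set, singletons and $[n]$ are trivial clans. For $X\subseteq[n]$, $\mathrm{Inv}(M,X)$ is obtained from $M$ by replacing $m_{ij}$ by $m_{ji}$ for all $i,j\in X$. For $\alpha>1/2$, $M$ is $\alpha$-linear if there is an ordering $x_1,\ldots,x_n$ of $[n]$ such that $m_{x_ix_j}=\alpha$ whenever $i<j$. *)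

theory Defs
  imports Complex_Main
begin

(* An n x n real matrix is represented as  M :: nat => nat => real,  with
   indices ranging over {0..<n} (the paper's [n] = {1..n}, shifted by one).
   Entries outside {0..<n} x {0..<n} are irrelevant. *)

definition gen_tournament :: "nat \<Rightarrow> (nat \<Rightarrow> nat \<Rightarrow> real) \<Rightarrow> bool" where
  "gen_tournament n M \<longleftrightarrow>
     (\<forall>i<n. \<forall>j<n. M i j \<ge> 0) \<and>
     (\<forall>i<n. \<forall>j<n. M i j + M j i = (if i = j then 0 else 1))"

definition clan :: "nat \<Rightarrow> (nat \<Rightarrow> nat \<Rightarrow> real) \<Rightarrow> nat set \<Rightarrow> bool" where
  "clan n M X \<longleftrightarrow> X \<subseteq> {0..<n} \<and>
     (\<forall>i\<in>X. \<forall>j\<in>X. \<forall>k\<in>{0..<n} - X. M i k = M j k \<and> M k i = M k j)"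

definition trivial_clan :: "nat \<Rightarrow> nat set \<Rightarrow> bool" where
  "trivial_clan n X \<longleftrightarrow> X = {} \<or> card X = 1 \<or> X = {0..<n}"

definition Inv :: "(nat \<Rightarrow> nat \<Rightarrow> real) \<Rightarrow> nat set \<Rightarrow> (nat \<Rightarrow> nat \<Rightarrow> real)" where
  "Inv M X = (\<lambda>i j. if i \<in> X \<and> j \<in> X then M j i else M i j)"

definition alpha_linear :: "nat \<Rightarrow> real \<Rightarrow> (nat \<Rightarrow> nat \<Rightarrow> real) \<Rightarrow> bool" where
  "alpha_linear n \<alpha> M \<longleftrightarrow>
     (\<exists>x. bij_betw x {0..<n} {0..<n} \<and> (\<forall>i<n. \<forall>j<n. i < j \<longrightarrow> M (x i) (x j) = \<alpha>))"

end

theory Submission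
  imports Defs
begin

lemma lin_val:
  assumes "gen_tournament n M" "\<forall>i<n. \<forall>j<n. i < j \<longrightarrow> M (x i) (x j) = \<alpha>"
    "bij_betw x {0..<n} {0..<n}" "i < n" "j < n"
  shows "M (x i) (x j) = (if i < j then \<alpha> else if i = j then 0 else 1 - \<alpha>)"
proof -
  have xi: "x i < n" "x j < n" using assms(3-5) bij_betwE by fastforce+
  have inj: "x i = x j \<longleftrightarrow> i = j" using assms(3-5) unfolding bij_betw_def inj_on_def by auto
  have g: "M (x i) (x j) + M (x j) (x i) = (if x i = x j then 0 else 1)"
    using assms(1) xi unfolding gen_tournament_def by blast
  show ?thesis
  proof (cases "i < j")
    case True then show ?thesis using assms(2,4,5) by auto
  next
    case False
    show ?thesis
    proof (cases "i = j")
      case True then show ?thesis using g by auto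
    next
      case F: False
      with False have "j < i" by auto
      then have "M (x j) (x i) = \<alpha>" using assms(2,4,5) by auto
      then show ?thesis using g inj F False by auto
    qed
  qed
qed

theorem proposition5p3:
  fixes n :: nat and \<alpha> :: real and A B :: "nat \<Rightarrow> nat \<Rightarrow> real"
  assumes "n \<ge> 3"
    and "1/2 < \<alpha>" and "\<alpha> \<le> 1"
    and "gen_tournament n A" and "gen_tournament n B"
    and "alpha_linear n \<alpha> A" and "alpha_linear n \<alpha> B"
  shows "\<exists>X. clan n A X \<and>
           (\<exists>Y. clan n (Inv A X) Y \<and> clan n B Y \<and> \<not> trivial_clan n Y)"
proof -
  obtain x where xb: "bij_betw x {0..<n} {0..<n}"
    and xa: "\<forall>i<n. \<forall>j<n. i < j \<longrightarrow> A (x i) (x j) = \<alpha>"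
    using assms(6) unfolding alpha_linear_def by blast
  obtain y where yb: "bij_betw y {0..<n} {0..<n}"
    and ya: "\<forall>i<n. \<forall>j<n. i < j \<longrightarrow> B (y i) (y j) = \<alpha>"
    using assms(7) unfolding alpha_linear_def by blast
  note LA = lin_val[OF assms(4) xa xb]
  note LB = lin_val[OF assms(5) ya yb]
  have surjx: "\<And>k. k < n \<Longrightarrow> \<exists>k'<n. k = x k'"
    using xb unfolding bij_betw_def by (metis atLeastLessThan_iff imageE le0)
  have surjy: "\<And>k. k < n \<Longrightarrow> \<exists>k'<n. k = y k'"
    using yb unfolding bij_betw_def by (metis atLeastLessThan_iff imageE le0)
  have injx: "\<And>i j. i < n \<Longrightarrow> j < n \<Longrightarrow> x i = x j \<longleftrightarrow> i = j"
    using xb unfolding bij_betw_def inj_on_def by auto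
  have injy: "\<And>i j. i < n \<Longrightarrow> j < n \<Longrightarrow> y i = y j \<longleftrightarrow> i = j"
    using yb unfolding bij_betw_def inj_on_def by auto
  have xlt: "\<And>i. i < n \<Longrightarrow> x i < n" using xb bij_betwE by fastforce
  have ylt: "\<And>i. i < n \<Longrightarrow> y i < n" using yb bij_betwE by fastforce
  have y0: "y 0 < n" "y 1 < n" using ylt assms(1) by auto
  obtain pa where pa: "pa < n" "y 0 = x pa" using surjx y0 by blast
  obtain pb where pb: "pb < n" "y 1 = x pb" using surjx y0 by blast
  have "pa \<noteq> pb" using pa pb injy[of 0 1] assms(1) by auto
  define p where "p = min pa pb"
  define q where "q = max pa pb"
  have pq: "p < q" "q < n" using \<open>pa \<noteq> pb\<close> pa pb unfolding p_def q_def by auto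
  have Yeq: "{y 0, y 1} = {x p, x q}" using pa pb unfolding p_def q_def by (auto simp: min_def max_def)
  define X where "X = x ` {p<..q}"
  have cX: "clan n A X"
    unfolding clan_def
  proof (intro conjI ballI)
    show "X \<subseteq> {0..<n}" unfolding X_def using xlt pq by auto
  next
    fix i j k assume i: "i \<in> X" and j: "j \<in> X" and k: "k \<in> {0..<n} - X"
    obtain i' where i': "i' \<in> {p<..q}" "i = x i'" using i X_def by auto
    obtain j' where j': "j' \<in> {p<..q}" "j = x j'" using j X_def by auto
    obtain k' where k': "k' < n" "k = x k'" using k surjx by auto
    have "k' \<notin> {p<..q}" using k k' X_def by auto
    then have kk: "k' \<le> p \<or> k' > q" by auto
    have "i' < n" "j' < n" using i' j' pq by auto
    then show "A i k = A j k" and "A k i = A k j"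
      using LA[of i' k'] LA[of j' k'] LA[of k' i'] LA[of k' j'] i' j' k' kk by auto
  qed
  have cY1: "clan n (Inv A X) {x p, x q}"
    unfolding clan_def
  proof (intro conjI ballI)
    show "{x p, x q} \<subseteq> {0..<n}" using xlt pq by auto
  next
    fix i j k assume i: "i \<in> {x p, x q}" and j: "j \<in> {x p, x q}" and k: "k \<in> {0..<n} - {x p, x q}"
    obtain k' where k': "k' < n" "k = x k'" using k surjx by auto
    have kne: "k' \<noteq> p" "k' \<noteq> q" using k k' by auto
    have pX: "x p \<notin> X" unfolding X_def using injx pq by auto
    have qX: "x q \<in> X" unfolding X_def using pq by auto
    have kX: "k \<in> X \<longleftrightarrow> p < k' \<and> k' \<le> q"
      unfolding X_def using injx pq k' by auto
    have "Inv A X (x p) k = Inv A X (x q) k \<and> Inv A X k (x p) = Inv A X k (x q)"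
    proof (cases "p < k' \<and> k' \<le> q")
      case True
      then show ?thesis using kX pX qX k' kne LA[of p k'] LA[of k' p] LA[of q k'] LA[of k' q] pq
        unfolding Inv_def by auto
    next
      case False
      then show ?thesis using kX pX qX k' kne LA[of p k'] LA[of k' p] LA[of q k'] LA[of k' q] pq
        unfolding Inv_def by auto
    qed
    then show "Inv A X i k = Inv A X j k" and "Inv A X k i = Inv A X k j"
      using i j by auto
  qed
  have cY2: "clan n B {y 0, y 1}"
    unfolding clan_def
  proof (intro conjI ballI)
    show "{y 0, y 1} \<subseteq> {0..<n}" using y0 by auto
  next
    fix i j k assume i: "i \<in> {y 0, y 1}" and j: "j \<in> {y 0, y 1}" and k: "k \<in> {0..<n} - {y 0, y 1}"
    obtain k' where k': "k' < n" "k = y k'" using k surjy by auto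
    have "k' \<noteq> 0" "k' \<noteq> 1" using k k' by (metis DiffD2 insertCI, metis DiffD2 insertCI)
    then have "k' > 1" by auto
    then have "B (y 0) k = B (y 1) k \<and> B k (y 0) = B k (y 1)"
      using LB[of 0 k'] LB[of 1 k'] LB[of k' 0] LB[of k' 1] k' assms(1) by auto
    then show "B i k = B j k" and "B k i = B k j" using i j by auto
  qed
  have nt: "\<not> trivial_clan n {y 0, y 1}"
  proof -
    have ne: "y 0 \<noteq> y 1" using injy[of 0 1] assms(1) by auto
    have c: "card {y 0, y 1} = 2" using ne by auto
    have "card {0..<n} \<ge> 3" using assms(1) by auto
    then have "{y 0, y 1} \<noteq> {0..<n}" using c by auto
    then show ?thesis unfolding trivial_clan_def using c by auto
  qed
  show ?thesis using cX cY1 cY2 nt Yeq by metis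
qed

end
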